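(* Let $(G,\varphi)$ be a complex unit gain graph and let $C_l$ be a cycle of $G$ of length $l$ that is a pendant cycle, with $u$ the only vertex of $C_l$ of degree $3$ in $G$ (all other vertices of $C_l$ having degree $2$ in $G$). Let $H=G-V(C_l)$ and let $G'$ be the subgraph of $G$ induced by $V(H)\cup\{u\}$. If $l$ is odd and $\mathrm{Re}\big((-1)^{(l-1)/2}\varphi(C_l)\big)=0$, then $r(G,\varphi)=r(G',\varphi)+l-1$.
   Context: A complex unit gain graph $(G,\varphi)$ is a simple finite graph $G$ with a gain function $\varphi$ assigning to each oriented edge $e_{ij}$ a complex number of modulus $1$ with $\varphi(e_{ji})=\overline{\varphi(e_{ij})}$. Its adjacency matrix $A(G,\varphi)$ has $(i,j)$-entry $\varphi(e_{ij})$ if $v_i,v_j$ are adjacent and $0$ otherwise; $r(G,\varphi)$ is its rank, and induced subgraphs carry the restricted gain. For a cycle $C_l=u_1u_2\cdots u_lu_1$, its gain is $\varphi(C_l)=\varphi(e_{u_1u_2})\cdots\varphi(e_{u_{l-1}u_l})\varphi(e_{u_lu_1})$. *)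

theory Defs
  imports Complex_Main "Jordan_Normal_Form.DL_Rank"
begin

definition gain_graph :: "'a set \<Rightarrow> ('a \<Rightarrow> 'a \<Rightarrow> bool) \<Rightarrow> ('a \<Rightarrow> 'a \<Rightarrow> complex) \<Rightarrow> bool" where
  "gain_graph V E phi \<longleftrightarrow> finite V
     \<and> (\<forall>x y. E x y \<longrightarrow> x \<in> V \<and> y \<in> V)
     \<and> (\<forall>x. \<not> E x x)
     \<and> (\<forall>x y. E x y \<longrightarrow> E y x)
     \<and> (\<forall>x y. E x y \<longrightarrow> cmod (phi x y) = 1 \<and> phi y x = cnj (phi x y))"

definition degree :: "'a set \<Rightarrow> ('a \<Rightarrow> 'a \<Rightarrow> bool) \<Rightarrow> 'a \<Rightarrow> nat" where
  "degree V E x = card {y \<in> V. E x y}"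

text \<open>Adjacency matrix of the subgraph induced by a finite vertex set S
(vertices ordered increasingly; the rank does not depend on the order).\<close>

definition adj_mat :: "'a::linorder set \<Rightarrow> ('a \<Rightarrow> 'a \<Rightarrow> bool) \<Rightarrow> ('a \<Rightarrow> 'a \<Rightarrow> complex) \<Rightarrow> complex mat" where
  "adj_mat S E phi = (let vs = sorted_list_of_set S in
     mat (length vs) (length vs) (\<lambda>(i, j). if E (vs ! i) (vs ! j) then phi (vs ! i) (vs ! j) else 0))"

definition gain_rank :: "'a::linorder set \<Rightarrow> ('a \<Rightarrow> 'a \<Rightarrow> bool) \<Rightarrow> ('a \<Rightarrow> 'a \<Rightarrow> complex) \<Rightarrow> nat" where
  "gain_rank S E phi = vec_space.rank (card S) (adj_mat S E phi)"

definition is_cycle :: "'a set \<Rightarrow> ('a \<Rightarrow> 'a \<Rightarrow> bool) \<Rightarrow> 'a list \<Rightarrow> bool" where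
  "is_cycle V E c \<longleftrightarrow> length c \<ge> 3 \<and> distinct c \<and> set c \<subseteq> V
     \<and> (\<forall>i < length c - 1. E (c ! i) (c ! Suc i)) \<and> E (last c) (hd c)"

definition cycle_gain :: "('a \<Rightarrow> 'a \<Rightarrow> complex) \<Rightarrow> 'a list \<Rightarrow> complex" where
  "cycle_gain phi c = (\<Prod>i < length c - 1. phi (c ! i) (c ! Suc i)) * phi (last c) (hd c)"

end

theory Submission
  imports Defs "Jordan_Normal_Form.Matrix_Kernel"
begin

lemma rank_nullity_mat:
  fixes A :: "'b::field mat"
  assumes A: "A \<in> carrier_mat nr nc"
  shows "vec_space.rank nr A + kernel_dim A = nc"
proof -
  interpret V: vec_space "TYPE('b)" nc .
  interpret W: vec_space "TYPE('b)" nr .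
  interpret K: kernel nr nc A by (unfold_locales, rule A)
  interpret T: linear_map class_ring "module_vec TYPE('b) nc" "module_vec TYPE('b) nr" "\<lambda>v. A *\<^sub>v v"
    apply (intro_locales)
    apply (unfold mod_hom_axioms_def LinearCombinations.module_hom_def)
    apply (auto simp add: module_vec_simps mult_add_distrib_mat_vec[OF A] mult_mat_vec[OF A] A intro: mult_mat_vec_carrier[OF A])

    done
  have rn: "vectorspace.dim class_ring (W.vs T.imT) + vectorspace.dim class_ring (V.vs T.kerT) = V.dim"
    by (rule T.rank_nullity) simp
  have ker: "T.kerT = mat_kernel A"
    unfolding mod_hom.ker_def[OF T.mod_hom_axioms] mat_kernel_def using A
    by (auto simp: module_vec_simps)
  have im: "T.imT = W.span (set (cols A))"
  proof -
    have "W.span (set (cols A)) = W.span_list (cols A)"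
      using W.span_list_as_span[of "cols A"] A cols_dim by (metis carrier_matD(1))
    also have "\<dots> = {W.lincomb_list c (cols A) | c. c \<in> {0..<length (cols A)} \<rightarrow> carrier class_ring}"
      unfolding W.span_list_def by simp
    also have "\<dots> = (\<lambda>v. A *\<^sub>v v) ` carrier_vec nc"
    proof (intro equalityI subsetI)
      fix x assume "x \<in> {W.lincomb_list c (cols A) | c. c \<in> {0..<length (cols A)} \<rightarrow> carrier class_ring}"
      then obtain c where x: "x = W.lincomb_list c (cols A)" by blast
      have "W.lincomb_list c (cols A) = mat_of_cols nr (cols A) *\<^sub>v vec (length (cols A)) c"
        by (rule W.lincomb_list_as_mat_mult) (use A cols_dim[of A] in force)
      also have "\<dots> = A *\<^sub>v vec nc c" using A mat_of_cols_cols[of A] by simp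
      finally show "x \<in> (\<lambda>v. A *\<^sub>v v) ` carrier_vec nc" using x by auto
    next
      fix x assume "x \<in> (\<lambda>v. A *\<^sub>v v) ` carrier_vec nc"
      then obtain v where v: "v \<in> carrier_vec nc" and x: "x = A *\<^sub>v v" by blast
      have "W.lincomb_list (\<lambda>i. v $ i) (cols A) = mat_of_cols nr (cols A) *\<^sub>v vec (length (cols A)) (\<lambda>i. v $ i)"
        by (rule W.lincomb_list_as_mat_mult) (use A cols_dim[of A] in force)
      also have "vec (length (cols A)) (\<lambda>i. v $ i) = v" using A v by (intro eq_vecI) auto
      also have "mat_of_cols nr (cols A) = A" using A mat_of_cols_cols[of A] by simp
      finally show "x \<in> {W.lincomb_list c (cols A) | c. c \<in> {0..<length (cols A)} \<rightarrow> carrier class_ring}"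
        using x by (auto simp: class_ring_simps) (metis)
    qed
    finally show ?thesis unfolding mod_hom.im_def[OF T.mod_hom_axioms] by (simp add: module_vec_simps)
  qed
  show ?thesis
    using rn unfolding ker im V.dim_is_n W.rank_def kernel_dim_def
    using A by simp
qed

lemma kernel_dim_eq_bij:
  fixes A :: "'b::field mat" and B :: "'b mat"
  assumes A: "A \<in> carrier_mat nr nc" and B: "B \<in> carrier_mat mr mc"
    and add: "\<And>x y. x \<in> mat_kernel A \<Longrightarrow> y \<in> mat_kernel A \<Longrightarrow> T (x + y) = T x + T y"
    and smult: "\<And>a x. x \<in> mat_kernel A \<Longrightarrow> T (a \<cdot>\<^sub>v x) = a \<cdot>\<^sub>v T x"
    and img: "T ` mat_kernel A = mat_kernel B"
    and inj: "inj_on T (mat_kernel A)"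
  shows "kernel_dim A = kernel_dim B"
proof -
  interpret KA: kernel nr nc A by (unfold_locales, rule A)
  interpret KB: kernel mr mc B by (unfold_locales, rule B)
  interpret T: linear_map class_ring KA.VK KB.VK T
    apply (intro_locales)
    apply (unfold mod_hom_axioms_def LinearCombinations.module_hom_def)
    using add smult img by (auto simp: module_vec_simps)
  have fd: "KA.Ker.fin_dim"
  proof -
    obtain C where "finite C" "KA.basis C" using kernel_basis_exists[OF A] by blast
    then show ?thesis unfolding KA.Ker.fin_dim_def KA.Ker.basis_def by auto
  qed
  have "KA.dim = KB.dim"
    by (rule T.dim_eq[OF fd]) (use inj img in auto)
  then show ?thesis unfolding kernel_dim_def using A B by simp
qed


definition nbsum :: "'a set \<Rightarrow> ('a \<Rightarrow> 'a \<Rightarrow> bool) \<Rightarrow> ('a \<Rightarrow> 'a \<Rightarrow> complex) \<Rightarrow> ('a \<Rightarrow> complex) \<Rightarrow> 'a \<Rightarrow> complex" where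
  "nbsum S E phi g a = (\<Sum>b\<in>{b\<in>S. E a b}. phi a b * g b)"

definition kerF :: "'a set \<Rightarrow> ('a \<Rightarrow> 'a \<Rightarrow> bool) \<Rightarrow> ('a \<Rightarrow> 'a \<Rightarrow> complex) \<Rightarrow> ('a \<Rightarrow> complex) set" where
  "kerF S E phi = {g. \<forall>a\<in>S. nbsum S E phi g a = 0}"

definition fv :: "'a::linorder set \<Rightarrow> complex vec \<Rightarrow> 'a \<Rightarrow> complex" where
  "fv S x b = x $ find_first b (sorted_list_of_set S)"

definition vf :: "'a::linorder set \<Rightarrow> ('a \<Rightarrow> complex) \<Rightarrow> complex vec" where
  "vf S g = vec (card S) (\<lambda>i. g (sorted_list_of_set S ! i))"

lemma ff_lt: "finite S \<Longrightarrow> b \<in> S \<Longrightarrow> find_first b (sorted_list_of_set S) < card S"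
  using find_first_le[of b "sorted_list_of_set S"] by simp

lemma ff_nth: "finite S \<Longrightarrow> b \<in> S \<Longrightarrow> sorted_list_of_set S ! find_first b (sorted_list_of_set S) = b"
  using nth_find_first[of b "sorted_list_of_set S"] by simp

lemma nth_in: "finite S \<Longrightarrow> i < card S \<Longrightarrow> sorted_list_of_set S ! i \<in> S"
  using nth_mem[of i "sorted_list_of_set S"] by simp

lemma nbsum_cong: "(\<And>b. b \<in> S \<Longrightarrow> g b = g' b) \<Longrightarrow> nbsum S E phi g a = nbsum S E phi g' a"
  unfolding nbsum_def by (rule sum.cong) auto

lemma kerF_cong: "(\<And>b. b \<in> S \<Longrightarrow> g b = g' b) \<Longrightarrow> g \<in> kerF S E phi \<longleftrightarrow> g' \<in> kerF S E phi"
  unfolding kerF_def using nbsum_cong[of S g g' E phi] by auto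

lemma adj_mat_carrier: "finite S \<Longrightarrow> adj_mat S E phi \<in> carrier_mat (card S) (card S)"
  unfolding adj_mat_def Let_def by simp

lemma vf_carrier[simp]: "vf S g \<in> carrier_vec (card S)"
  unfolding vf_def by simp

lemma fv_vf: "finite S \<Longrightarrow> b \<in> S \<Longrightarrow> fv S (vf S g) b = g b"
  unfolding fv_def vf_def
  by (subst index_vec) (auto simp: ff_lt ff_nth)

lemma vf_fv: "finite S \<Longrightarrow> x \<in> carrier_vec (card S) \<Longrightarrow> vf S (fv S x) = x"
  unfolding fv_def vf_def
  by (intro eq_vecI) (auto simp: find_first_unique)

lemma vf_cong: "finite S \<Longrightarrow> (\<And>b. b \<in> S \<Longrightarrow> g b = g' b) \<Longrightarrow> vf S g = vf S g'"
  unfolding vf_def by (intro eq_vecI) (auto simp: nth_in)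

lemma fv_add: "finite S \<Longrightarrow> b \<in> S \<Longrightarrow> x \<in> carrier_vec (card S) \<Longrightarrow> y \<in> carrier_vec (card S) \<Longrightarrow>
   fv S (x + y) b = fv S x b + fv S y b"
  unfolding fv_def
  by (subst index_add_vec) (auto simp: ff_lt)

lemma fv_smult: "finite S \<Longrightarrow> b \<in> S \<Longrightarrow> x \<in> carrier_vec (card S) \<Longrightarrow>
   fv S (a \<cdot>\<^sub>v x) b = a * fv S x b"
  unfolding fv_def
  by (subst index_smult_vec) (auto simp: ff_lt)

lemma mult_adj_index:
  assumes S: "finite S" and x: "x \<in> carrier_vec (card S)" and i: "i < card S"
  shows "(adj_mat S E phi *\<^sub>v x) $ i = nbsum S E phi (fv S x) (sorted_list_of_set S ! i)"
proof -
  let ?vs = "sorted_list_of_set S"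
  let ?a = "?vs ! i"
  have len: "length ?vs = card S" by simp
  have bij: "bij_betw (nth ?vs) {..<card S} S"
    using S by (metis bij_betw_nth distinct_sorted_list_of_set len lessThan_atLeast0 set_sorted_list_of_set)
  have "(adj_mat S E phi *\<^sub>v x) $ i = (\<Sum>j<card S. (if E ?a (?vs ! j) then phi ?a (?vs ! j) else 0) * x $ j)"
    using i x unfolding adj_mat_def Let_def mult_mat_vec_def scalar_prod_def
    by (auto simp: lessThan_atLeast0 intro!: sum.cong)
  also have "\<dots> = (\<Sum>j<card S. (if E ?a (?vs ! j) then phi ?a (?vs ! j) else 0) * fv S x (?vs ! j))"
    unfolding fv_def using S by (intro sum.cong) (auto simp: find_first_unique)
  also have "\<dots> = (\<Sum>b\<in>S. (if E ?a b then phi ?a b else 0) * fv S x b)"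
    by (rule sum.reindex_bij_betw[OF bij])
  also have "\<dots> = (\<Sum>b\<in>S. if E ?a b then phi ?a b * fv S x b else 0)"
    by (rule sum.cong) auto
  also have "\<dots> = nbsum S E phi (fv S x) ?a"
    unfolding nbsum_def using S by (simp add: sum.inter_filter)
  finally show ?thesis .
qed

lemma mat_kernel_adj_iff:
  assumes S: "finite S" and x: "x \<in> carrier_vec (card S)"
  shows "x \<in> mat_kernel (adj_mat S E phi) \<longleftrightarrow> fv S x \<in> kerF S E phi"
proof -
  have "x \<in> mat_kernel (adj_mat S E phi) \<longleftrightarrow> (\<forall>i<card S. (adj_mat S E phi *\<^sub>v x) $ i = 0)"
  proof -
    have M: "adj_mat S E phi \<in> carrier_mat (card S) (card S)" by (rule adj_mat_carrier[OF S])
    have "x \<in> mat_kernel (adj_mat S E phi) \<longleftrightarrow> adj_mat S E phi *\<^sub>v x = 0\<^sub>v (card S)"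
      using mat_kernel[OF M] x by auto
    also have "\<dots> \<longleftrightarrow> (\<forall>i<card S. (adj_mat S E phi *\<^sub>v x) $ i = 0)"
      using M by (auto simp: vec_eq_iff)
    finally show ?thesis .
  qed
  also have "\<dots> \<longleftrightarrow> (\<forall>i<card S. nbsum S E phi (fv S x) (sorted_list_of_set S ! i) = 0)"
    using mult_adj_index[OF S x] by simp
  also have "\<dots> \<longleftrightarrow> (\<forall>a\<in>S. nbsum S E phi (fv S x) a = 0)"
    using S by (metis in_set_conv_nth set_sorted_list_of_set sorted_list_of_set.length_sorted_key_list_of_set)
  finally show ?thesis unfolding kerF_def by simp
qed

lemma vf_add: "vf S (\<lambda>b. g b + h b) = vf S g + vf S h"
  unfolding vf_def by (intro eq_vecI) auto

lemma vf_smult: "vf S (\<lambda>b. a * g b) = a \<cdot>\<^sub>v vf S g"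
  unfolding vf_def by (intro eq_vecI) auto

lemma rank_reduce:
  fixes V V' :: "'a::linorder set"
  assumes V: "finite V" and sub: "V' \<subseteq> V"
    and G1: "\<And>f. f \<in> kerF V E phi \<Longrightarrow> f \<in> kerF V' E phi"
    and G2: "\<And>f1 f2 b. f1 \<in> kerF V E phi \<Longrightarrow> f2 \<in> kerF V E phi \<Longrightarrow> (\<forall>b\<in>V'. f1 b = f2 b) \<Longrightarrow> b \<in> V \<Longrightarrow> f1 b = f2 b"
    and G3: "\<And>g. g \<in> kerF V' E phi \<Longrightarrow> \<exists>f \<in> kerF V E phi. \<forall>b\<in>V'. f b = g b"
  shows "gain_rank V E phi + card V' = gain_rank V' E phi + card V"
proof -
  have V': "finite V'" using V sub finite_subset by blast
  let ?A = "adj_mat V E phi" and ?B = "adj_mat V' E phi"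
  have A: "?A \<in> carrier_mat (card V) (card V)" by (rule adj_mat_carrier[OF V])
  have B: "?B \<in> carrier_mat (card V') (card V')" by (rule adj_mat_carrier[OF V'])
  define T where "T x = vf V' (fv V x)" for x
  have kerA: "x \<in> mat_kernel ?A \<longleftrightarrow> x \<in> carrier_vec (card V) \<and> fv V x \<in> kerF V E phi" for x
    using mat_kernel_adj_iff[OF V] mat_kernel_carrier[OF A] by blast
  have kerB: "x \<in> mat_kernel ?B \<longleftrightarrow> x \<in> carrier_vec (card V') \<and> fv V' x \<in> kerF V' E phi" for x
    using mat_kernel_adj_iff[OF V'] mat_kernel_carrier[OF B] by blast
  have fvT: "b \<in> V' \<Longrightarrow> fv V' (T x) b = fv V x b" for x b
    unfolding T_def by (rule fv_vf[OF V'])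
  have "kernel_dim ?A = kernel_dim ?B"
  proof (rule kernel_dim_eq_bij[OF A B])
    fix x y assume x: "x \<in> mat_kernel ?A" and y: "y \<in> mat_kernel ?A"
    have "T (x + y) = vf V' (\<lambda>b. fv V x b + fv V y b)"
      unfolding T_def using x y kerA sub by (intro vf_cong[OF V'] fv_add[OF V]) auto
    then show "T (x + y) = T x + T y" unfolding T_def by (simp add: vf_add)
  next
    fix a x assume x: "x \<in> mat_kernel ?A"
    have "T (a \<cdot>\<^sub>v x) = vf V' (\<lambda>b. a * fv V x b)"
      unfolding T_def using x kerA sub by (intro vf_cong[OF V'] fv_smult[OF V]) auto
    then show "T (a \<cdot>\<^sub>v x) = a \<cdot>\<^sub>v T x" unfolding T_def by (simp add: vf_smult)
  next
    show "T ` mat_kernel ?A = mat_kernel ?B"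
    proof (intro equalityI subsetI)
      fix z assume "z \<in> T ` mat_kernel ?A"
      then obtain x where x: "x \<in> mat_kernel ?A" and z: "z = T x" by blast
      have "fv V x \<in> kerF V' E phi" using G1 x kerA by blast
      then have "fv V' z \<in> kerF V' E phi" using kerF_cong[of V' "fv V' z" "fv V x"] fvT z by blast
      then show "z \<in> mat_kernel ?B" using kerB z unfolding T_def by simp
    next
      fix y assume y: "y \<in> mat_kernel ?B"
      then have "fv V' y \<in> kerF V' E phi" using kerB by blast
      then obtain f where f: "f \<in> kerF V E phi" and fg: "\<forall>b\<in>V'. f b = fv V' y b" using G3 by blast
      define x where "x = vf V f"
      have fx: "b \<in> V \<Longrightarrow> fv V x b = f b" for b unfolding x_def by (rule fv_vf[OF V])
      have "fv V x \<in> kerF V E phi" using kerF_cong[of V "fv V x" f] fx f by blast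
      then have xk: "x \<in> mat_kernel ?A" using kerA x_def by simp
      have "T x = vf V' (fv V' y)"
        unfolding T_def using fx fg sub by (intro vf_cong[OF V']) auto
      also have "\<dots> = y" using y kerB vf_fv[OF V'] by blast
      finally show "y \<in> T ` mat_kernel ?A" using xk by blast
    qed
  next
    show "inj_on T (mat_kernel ?A)"
    proof (rule inj_onI)
      fix x1 x2 assume x1: "x1 \<in> mat_kernel ?A" and x2: "x2 \<in> mat_kernel ?A" and eq: "T x1 = T x2"
      have "\<forall>b\<in>V'. fv V x1 b = fv V x2 b" using fvT eq by metis
      moreover have "fv V x1 \<in> kerF V E phi" "fv V x2 \<in> kerF V E phi" using x1 x2 kerA by auto
      ultimately have "b \<in> V \<Longrightarrow> fv V x1 b = fv V x2 b" for b using G2[of "fv V x1" "fv V x2"] by blast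
      then have "vf V (fv V x1) = vf V (fv V x2)" by (intro vf_cong[OF V])
      then show "x1 = x2" using vf_fv[OF V] x1 x2 kerA by metis
    qed
  qed
  moreover have "vec_space.rank (card V) ?A + kernel_dim ?A = card V" by (rule rank_nullity_mat[OF A])
  moreover have "vec_space.rank (card V') ?B + kernel_dim ?B = card V'" by (rule rank_nullity_mat[OF B])
  ultimately show ?thesis unfolding gain_rank_def by linarith
qed


lemma unit_cnj: "cmod x = 1 \<Longrightarrow> x * cnj x = 1"
  by (metis complex_norm_square mult.right_neutral of_real_1 power_one)

lemma AL1: "cmod x = 1 \<Longrightarrow> cnj x * a + y * b = 0 \<Longrightarrow> a = - x * y * b"
proof -
  assume x: "cmod x = 1" and h: "cnj x * a + y * b = 0"
  have "a = x * cnj x * a" using unit_cnj[OF x] by simp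
  also have "\<dots> = x * (cnj x * a)" by simp
  also have "cnj x * a = - y * b" using h by (simp add: eq_neg_iff_add_eq_0)
  finally show ?thesis by simp
qed

lemma AL2: "cmod y = 1 \<Longrightarrow> cnj x * a + y * b = 0 \<Longrightarrow> b = - cnj y * cnj x * a"
proof -
  assume y: "cmod y = 1" and h: "cnj x * a + y * b = 0"
  have "b = cnj y * y * b" using unit_cnj[OF y] by (simp add: mult.commute)
  also have "\<dots> = cnj y * (y * b)" by simp
  also have "y * b = - cnj x * a" using h by (simp add: eq_neg_iff_add_eq_0 add.commute)
  finally show ?thesis by simp
qed

locale pend =
  fixes V :: "'a::linorder set" and E :: "'a \<Rightarrow> 'a \<Rightarrow> bool"
    and phi :: "'a \<Rightarrow> 'a \<Rightarrow> complex" and c :: "'a list" and u :: 'a and k :: nat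
  assumes gg: "gain_graph V E phi" and cyc: "is_cycle V E c"
    and k: "k < length c" and uk: "c ! k = u"
    and deg2: "\<forall>x \<in> set c. x \<noteq> u \<longrightarrow> degree V E x = 2"
    and odd: "odd (length c)"
begin

abbreviation "l \<equiv> length c"
definition "m = (l - 1) div 2"
definition "p j = c ! ((k + j) mod l)"
definition "e j = phi (p j) (p (Suc j))"
definition "V' = (V - set c) \<union> {u}"
definition "ev i = (-1)^i * cnj (\<Prod>j<2*i. e j)"
definition "od i = (-1)^(m-i) * (\<Prod>j\<in>{2*i+1..2*m}. e j)"
definition "pv j = (if even j then ev (j div 2) else od (j div 2))"

lemma finV: "finite V" using gg unfolding gain_graph_def by simp
lemma l3: "l \<ge> 3" using cyc unfolding is_cycle_def by simp
lemma lm: "l = 2*m + 1" unfolding m_def using odd by (auto elim!: oddE)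
lemma lpos: "0 < l" using l3 by linarith
lemma m1: "m \<ge> 1" using lm l3 by linarith
lemma dist: "distinct c" using cyc unfolding is_cycle_def by simp
lemma setV: "set c \<subseteq> V" using cyc unfolding is_cycle_def by simp

lemma p_mod: "p (j mod l) = p j"
  unfolding p_def by (simp add: mod_add_right_eq)

lemma p_l: "p l = u" unfolding p_def using k uk by simp
lemma p_0: "p 0 = u" unfolding p_def using k uk by simp

lemma p_in: "p j \<in> set c" unfolding p_def using lpos by (intro nth_mem) simp
lemma p_V: "p j \<in> V" using p_in setV by blast

lemma modinj: "a < l \<Longrightarrow> b < l \<Longrightarrow> (k + a) mod l = (k + b) mod l \<Longrightarrow> a = b"
proof -
  assume a: "a < l" and b: "b < l" and eq: "(k + a) mod l = (k + b) mod l"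
  have key: "x = y" if xy: "x \<le> y" "y < l" and h: "(k + x) mod l = (k + y) mod l" for x y
  proof -
    have "l dvd (k + y) - (k + x)" using mod_eq_dvd_iff_nat[of "k+x" "k+y" l] xy h by simp
    then have "l dvd y - x" by simp
    then show "x = y" using xy by (cases "y - x = 0") (auto dest: dvd_imp_le)
  qed
  show "a = b"
  proof (cases "a \<le> b")
    case True then show ?thesis using key[of a b] b eq by blast
  next
    case False then show ?thesis using key[of b a] a eq by simp
  qed
qed

lemma p_inj: "a < l \<Longrightarrow> b < l \<Longrightarrow> p a = p b \<Longrightarrow> a = b"
proof -
  assume a: "a < l" and b: "b < l" and eq: "p a = p b"
  have "(k + a) mod l = (k + b) mod l"
    using eq dist lpos unfolding p_def by (subst (asm) nth_eq_iff_index_eq) auto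
  then show "a = b" using modinj a b by blast
qed

lemma set_c: "set c = p ` {..<l}"
proof
  show "p ` {..<l} \<subseteq> set c" using p_in by auto
next
  show "set c \<subseteq> p ` {..<l}"
  proof
    fix x assume "x \<in> set c"
    then obtain i where i: "i < l" "c ! i = x" by (auto simp: in_set_conv_nth)
    define j where "j = (l - k + i) mod l"
    have "(k + j) mod l = (k + (l - k + i)) mod l" unfolding j_def by (simp add: mod_add_right_eq)
    also have "k + (l - k + i) = i + l" using k by simp
    also have "(i + l) mod l = i" using i by simp
    finally have "(k + j) mod l = i" .
    then have "p j = x" unfolding p_def using i by simp
    moreover have "j < l" unfolding j_def using lpos by simp
    ultimately show "x \<in> p ` {..<l}" by blast
  qed
qed

lemma edge_c: "i < l \<Longrightarrow> E (c ! i) (c ! ((Suc i) mod l))"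
proof -
  assume i: "i < l"
  show ?thesis
  proof (cases "Suc i < l")
    case True then show ?thesis using cyc unfolding is_cycle_def by simp
  next
    case False
    then have "i = l - 1" using i by simp
    moreover have "last c = c ! (l - 1)" using l3 by (intro last_conv_nth) auto
    moreover have "hd c = c ! 0" using l3 by (intro hd_conv_nth) auto
    moreover have "Suc (l - 1) mod l = 0" using lpos by simp
    ultimately show ?thesis using cyc unfolding is_cycle_def by simp
  qed
qed

lemma edge: "E (p j) (p (Suc j))"
proof -
  have "E (c ! ((k + j) mod l)) (c ! ((Suc ((k + j) mod l)) mod l))"
    using edge_c[of "(k + j) mod l"] lpos by simp
  moreover have "(Suc ((k + j) mod l)) mod l = (k + Suc j) mod l" by (simp add: mod_Suc_eq)
  ultimately show ?thesis unfolding p_def by simp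
qed

lemma sym: "E x y \<Longrightarrow> E y x" using gg unfolding gain_graph_def by blast
lemma irr: "\<not> E x x" using gg unfolding gain_graph_def by blast

lemma edge': "E (p (Suc j)) (p j)" using edge sym by blast

lemma e_unit: "cmod (e j) = 1" using gg edge unfolding gain_graph_def e_def by blast
lemma e_rev: "phi (p (Suc j)) (p j) = cnj (e j)" using gg edge unfolding gain_graph_def e_def by blast

lemma uV: "u \<in> V" using p_V[of 0] p_0 by simp
lemma V'V: "V' \<subseteq> V" unfolding V'_def using uV by auto
lemma finV': "finite V'" using finV V'V finite_subset by blast

lemma p_ne_u: "1 \<le> j \<Longrightarrow> j < l \<Longrightarrow> p j \<noteq> u"
  using p_inj[of j 0] p_0 lpos by auto

lemma p_Suc_2m: "p (Suc (2*m)) = u" using p_l lm by simp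

lemma nb_path:
  assumes j: "1 \<le> j" "j < l"
  shows "{b\<in>V. E (p j) b} = {p (j-1), p (Suc j)}" and "p (j-1) \<noteq> p (Suc j)"
proof -
  have deg: "card {b\<in>V. E (p j) b} = 2"
    using deg2 p_in[of j] p_ne_u[OF j] unfolding degree_def by blast
  have "E (p (Suc (j-1))) (p (j-1))" by (rule edge')
  then have e1: "E (p j) (p (j-1))" using j by simp
  have sub: "{p (j-1), p (Suc j)} \<subseteq> {b\<in>V. E (p j) b}" using e1 edge[of j] p_V by auto
  show ne: "p (j-1) \<noteq> p (Suc j)"
  proof
    assume eq: "p (j-1) = p (Suc j)"
    show False
    proof (cases "Suc j < l")
      case True
      have "j - 1 < l" using j by linarith
      then have "j - 1 = Suc j" using p_inj[of "j-1" "Suc j"] eq True by blast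
      then show False by linarith
    next
      case False
      then have "p (Suc j) = p 0" using j p_l p_0 by (metis Suc_lessI)
      then have "j - 1 = 0" using p_inj[of "j-1" 0] eq j lpos by simp
      then show False using False j l3 by simp
    qed
  qed
  have "card {p (j-1), p (Suc j)} = 2" using ne by simp
  then show "{b\<in>V. E (p j) b} = {p (j-1), p (Suc j)}"
    using card_subset_eq[OF _ sub] deg finV by simp
qed

lemma nbsum_path:
  assumes j: "1 \<le> j" "j < l"
  shows "nbsum V E phi f (p j) = cnj (e (j-1)) * f (p (j-1)) + e j * f (p (Suc j))"
proof -
  have "phi (p j) (p (j-1)) = cnj (e (j-1))" using e_rev[of "j-1"] j by simp
  then show ?thesis unfolding nbsum_def nb_path(1)[OF j] using nb_path(2)[OF j] by (simp add: e_def)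
qed

lemma nb_u:
  shows "{b\<in>V. E u b} = {b\<in>V'. E u b} \<union> {p 1, p (2*m)}"
    and "{b\<in>V'. E u b} \<inter> {p 1, p (2*m)} = {}"
    and "p 1 \<noteq> p (2*m)"
proof -
  have l2m: "2*m < l" "1 < l" using lm m1 by auto
  show "p 1 \<noteq> p (2*m)" using p_inj[of 1 "2*m"] l2m m1 by auto
  have u1: "E u (p 1)" using edge[of 0] p_0 by simp
  have u2: "E u (p (2*m))" using edge'[of "2*m"] p_Suc_2m by simp
  show "{b\<in>V. E u b} = {b\<in>V'. E u b} \<union> {p 1, p (2*m)}"
  proof (intro equalityI subsetI)
    fix b assume b: "b \<in> {b\<in>V. E u b}"
    show "b \<in> {b\<in>V'. E u b} \<union> {p 1, p (2*m)}"
    proof (cases "b \<in> set c")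
      case False then show ?thesis using b unfolding V'_def by auto
    next
      case True
      then obtain j where j: "j < l" "b = p j" using set_c by auto
      have "j \<noteq> 0" using j b irr[of u] p_0 by (cases j) auto
      moreover have False if "j \<noteq> 1" "j \<noteq> 2*m" "j \<noteq> 0"
      proof -
        have j1: "1 \<le> j" "j < l" using that j by auto
        have "E (p j) u" using b j sym by auto
        then have "u \<in> {p (j-1), p (Suc j)}" using nb_path(1)[OF j1] uV by blast
        then show False
        proof
          assume a: "u = p (j-1)"
          have "j - 1 < l" using j by linarith
          then have "0 = j - 1" using p_inj[of 0 "j-1"] p_0 a lpos by simp
          then show False using that by linarith
        next
          assume "u \<in> {p (Suc j)}"
          moreover have "Suc j < l" using that j lm by auto
          ultimately show False using p_inj[of 0 "Suc j"] p_0 lpos by simp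
        qed
      qed
      ultimately show ?thesis using j by blast
    qed
  next
    fix b assume "b \<in> {b\<in>V'. E u b} \<union> {p 1, p (2*m)}"
    then show "b \<in> {b\<in>V. E u b}" using V'V u1 u2 p_V by auto
  qed
  show "{b\<in>V'. E u b} \<inter> {p 1, p (2*m)} = {}"
  proof -
    have "p 1 \<notin> V'" "p (2*m) \<notin> V'"
      using p_in p_ne_u[of 1] p_ne_u[of "2*m"] l2m m1 unfolding V'_def by auto
    then show ?thesis by auto
  qed
qed

lemma nbsum_u: "nbsum V E phi f u = nbsum V' E phi f u + e 0 * f (p 1) + cnj (e (2*m)) * f (p (2*m))"
proof -
  have fin: "finite {b\<in>V'. E u b}" using finV' by simp
  have "nbsum V E phi f u = nbsum V' E phi f u + (\<Sum>b\<in>{p 1, p (2*m)}. phi u b * f b)"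
    unfolding nbsum_def nb_u(1) by (rule sum.union_disjoint[OF fin _ nb_u(2)]) simp
  also have "(\<Sum>b\<in>{p 1, p (2*m)}. phi u b * f b) = phi u (p 1) * f (p 1) + phi u (p (2*m)) * f (p (2*m))"
    using nb_u(3) by simp
  also have "phi u (p 1) = e 0" unfolding e_def using p_0 by simp
  also have "phi u (p (2*m)) = cnj (e (2*m))" using e_rev[of "2*m"] p_Suc_2m by simp
  finally show ?thesis by simp
qed

lemma nb_h: assumes h: "h \<in> V - set c" shows "{b\<in>V. E h b} = {b\<in>V'. E h b}"
proof (intro equalityI subsetI)
  fix b assume b: "b \<in> {b\<in>V. E h b}"
  show "b \<in> {b\<in>V'. E h b}"
  proof (cases "b \<in> set c \<and> b \<noteq> u")
    case True
    then obtain j where j: "j < l" "b = p j" using set_c by auto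
    have "j \<noteq> 0" using True j p_0 by (cases j) auto
    then have j1: "1 \<le> j" "j < l" using j by auto
    have "h \<in> {b\<in>V. E (p j) b}" using b j sym h by auto
    then have "h \<in> set c" using nb_path(1)[OF j1] p_in by auto
    then show ?thesis using h by simp
  next
    case False then show ?thesis using b unfolding V'_def by auto
  qed
next
  fix b assume "b \<in> {b\<in>V'. E h b}" then show "b \<in> {b\<in>V. E h b}" using V'V by auto
qed

lemma nbsum_h: "h \<in> V - set c \<Longrightarrow> nbsum V E phi f h = nbsum V' E phi f h"
  unfolding nbsum_def using nb_h by simp

lemma ecnj: "e j * cnj (e j) = 1" by (rule unit_cnj[OF e_unit])

lemma ev_0: "ev 0 = 1" unfolding ev_def by simp
lemma od_m: "od m = 1" unfolding od_def by simp

lemma ev_Suc: "ev (Suc i) = - cnj (e (2*i+1)) * cnj (e (2*i)) * ev i"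
proof -
  have "(\<Prod>j<2 * Suc i. e j) = (\<Prod>j<2*i. e j) * e (2*i) * e (2*i+1)"
    by (simp add: mult.assoc)
  then show ?thesis unfolding ev_def by (simp add: algebra_simps)
qed

lemma od_Suc: "i < m \<Longrightarrow> od i = - e (2*i+1) * e (2*i+2) * od (Suc i)"
proof -
  assume i: "i < m"
  have "(\<Prod>j\<in>{2*i+1..2*m}. e j) = e (2*i+1) * (\<Prod>j\<in>{2*i+2..2*m}. e j)"
    using i by (subst prod.atLeast_Suc_atMost) auto
  also have "(\<Prod>j\<in>{2*i+2..2*m}. e j) = e (2*i+2) * (\<Prod>j\<in>{2*Suc i+1..2*m}. e j)"
    using i by (subst prod.atLeast_Suc_atMost) auto
  finally have P: "(\<Prod>j\<in>{2*i+1..2*m}. e j) = e (2*i+1) * e (2*i+2) * (\<Prod>j\<in>{2*Suc i+1..2*m}. e j)"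
    by simp
  have S: "(-1::complex)^(m-i) = - ((-1)^(m - Suc i))"
    using i by (metis Suc_diff_Suc mult_minus1 power_Suc)
  show ?thesis unfolding od_def P S by (simp add: algebra_simps)
qed

lemma pv_even: "pv (2*i) = ev i" unfolding pv_def by simp
lemma pv_odd: "pv (2*i+1) = od i" unfolding pv_def by simp
lemma pv_0: "pv 0 = 1" unfolding pv_def using ev_0 by simp
lemma pv_l: "pv l = 1" using pv_odd[of m] od_m lm by simp

lemma path_eq:
  assumes j: "1 \<le> j" "j \<le> 2*m"
  shows "cnj (e (j-1)) * pv (j-1) + e j * pv (Suc j) = 0"
proof (cases "even j")
  case True
  then obtain i where i: "j = 2 * Suc i" using j by (metis evenE not0_implies_Suc not_one_le_zero mult_0_right)
  have im: "i < m" using i j by simp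
  have h1: "j - 1 = 2*i+1" "Suc j = 2 * Suc i + 1" "j = 2*i+2" using i by auto
  have "cnj (e (j-1)) * pv (j-1) + e j * pv (Suc j)
      = cnj (e (2*i+1)) * (- e (2*i+1) * e (2*i+2) * od (Suc i)) + e (2*i+2) * od (Suc i)"
  proof -
    have p1: "pv (j-1) = od i" using pv_odd[of i] h1 by simp
    have p2: "pv (Suc j) = od (Suc i)" using pv_odd[of "Suc i"] h1 by simp
    show ?thesis unfolding p1 p2 unfolding h1(1) unfolding h1(3) od_Suc[OF im] by simp
  qed
  also have "\<dots> = e (2*i+2) * od (Suc i) * (1 - e (2*i+1) * cnj (e (2*i+1)))"
    by (simp add: algebra_simps)
  also have "\<dots> = 0" using ecnj by simp
  finally show ?thesis .
next
  case False
  then obtain i where i: "j = 2*i+1" by (metis oddE)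
  have h1: "j - 1 = 2*i" "Suc j = 2 * Suc i" using i by auto
  have "cnj (e (j-1)) * pv (j-1) + e j * pv (Suc j)
      = cnj (e (2*i)) * ev i + e (2*i+1) * (- cnj (e (2*i+1)) * cnj (e (2*i)) * ev i)"
  proof -
    have p1: "pv (j-1) = ev i" using pv_even[of i] h1 by simp
    have p2: "pv (Suc j) = ev (Suc i)" using pv_even[of "Suc i"] h1 by simp
    show ?thesis unfolding p1 p2 unfolding h1(1) unfolding i ev_Suc by simp
  qed
  also have "\<dots> = cnj (e (2*i)) * ev i * (1 - e (2*i+1) * cnj (e (2*i+1)))"
    by (simp add: algebra_simps)
  also have "\<dots> = 0" using ecnj by simp
  finally show ?thesis .
qed

lemma ker_path:
  assumes f: "f \<in> kerF V E phi" and j: "1 \<le> j" "j \<le> 2*m"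
  shows "cnj (e (j-1)) * f (p (j-1)) + e j * f (p (Suc j)) = 0"
proof -
  have "j < l" using j lm by simp
  then show ?thesis using f p_V[of j] nbsum_path[of j f] j unfolding kerF_def by simp
qed

lemma uniq:
  assumes f: "f \<in> kerF V E phi" and j: "j \<le> l"
  shows "f (p j) = pv j * f u"
proof -
  have evn: "i \<le> m \<Longrightarrow> f (p (2*i)) = ev i * f u" for i
  proof (induction i)
    case 0 then show ?case using p_0 ev_0 by simp
  next
    case (Suc i)
    have "cnj (e (2*i)) * f (p (2*i)) + e (2*i+1) * f (p (Suc (2*i+1))) = 0"
      using ker_path[OF f, of "2*i+1"] Suc.prems by simp
    then have "f (p (Suc (2*i+1))) = - cnj (e (2*i+1)) * cnj (e (2*i)) * f (p (2*i))"
      by (rule AL2[OF e_unit])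
    also have "\<dots> = ev (Suc i) * f u" using Suc by (simp add: ev_Suc)
    finally show ?case by simp
  qed
  have odd: "d \<le> m \<Longrightarrow> f (p (2*(m-d)+1)) = od (m-d) * f u" for d
  proof (induction d)
    case 0 then show ?case using p_Suc_2m od_m by simp
  next
    case (Suc d)
    define i where "i = m - Suc d"
    have im: "i < m" and md: "m - d = Suc i" using Suc.prems unfolding i_def by auto
    have "cnj (e (2*i+1)) * f (p (2*i+1)) + e (2*i+2) * f (p (Suc (2*i+2))) = 0"
      using ker_path[OF f, of "2*i+2"] im by simp
    then have "f (p (2*i+1)) = - e (2*i+1) * e (2*i+2) * f (p (Suc (2*i+2)))"
      by (rule AL1[OF e_unit])
    also have "Suc (2*i+2) = 2*(m-d)+1" using md by simp
    also have "f (p (2*(m-d)+1)) = od (m-d) * f u" using Suc by simp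
    finally show ?case unfolding i_def[symmetric] md using od_Suc[OF im] by simp
  qed
  show ?thesis
  proof (cases "even j")
    case True
    then obtain i where i: "j = 2*i" by (metis evenE)
    then show ?thesis using evn[of i] j lm pv_even by simp
  next
    case False
    then obtain i where i: "j = 2*i+1" by (metis oddE)
    have "i \<le> m" using i j lm by simp
    then have "m - (m - i) = i" by simp
    then show ?thesis using odd[of "m - i"] i pv_odd by simp
  qed
qed

lemma cycle_gain_eq: "cycle_gain phi c = (\<Prod>j<l. e j)"
proof -
  define F where "F i = phi (c ! i) (c ! (Suc i mod l))" for i
  have l1: "l = Suc (l - 1)" using lpos by simp
  have "(\<Prod>i<l. F i) = (\<Prod>i<l-1. F i) * F (l - 1)"
    by (subst l1) (simp only: prod.lessThan_Suc diff_Suc_1)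
  also have "(\<Prod>i<l-1. F i) = (\<Prod>i<l-1. phi (c ! i) (c ! Suc i))"
    unfolding F_def by (intro prod.cong) auto
  also have "F (l - 1) = phi (last c) (hd c)"
  proof -
    have "Suc (l - 1) mod l = 0" using lpos by simp
    moreover have "last c = c ! (l - 1)" using l3 by (intro last_conv_nth) auto
    moreover have "hd c = c ! 0" using l3 by (intro hd_conv_nth) auto
    ultimately show ?thesis unfolding F_def by simp
  qed
  finally have cg: "cycle_gain phi c = (\<Prod>i<l. F i)" unfolding cycle_gain_def by simp
  have bij: "bij_betw (\<lambda>j. (k + j) mod l) {..<l} {..<l}"
  proof -
    have inj: "inj_on (\<lambda>j. (k + j) mod l) {..<l}" using modinj by (auto simp: inj_on_def)
    have sub: "(\<lambda>j. (k + j) mod l) ` {..<l} \<subseteq> {..<l}" using lpos by auto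
    show ?thesis unfolding bij_betw_def using endo_inj_surj[OF _ sub inj] inj by simp
  qed
  have "(\<Prod>j<l. e j) = (\<Prod>j<l. F ((k + j) mod l))"
  proof (intro prod.cong refl)
    fix j
    have "Suc ((k + j) mod l) mod l = (k + Suc j) mod l" by (simp add: mod_Suc_eq)
    then show "e j = F ((k + j) mod l)" unfolding e_def p_def F_def by simp
  qed
  also have "\<dots> = (\<Prod>i<l. F i)" by (rule prod.reindex_bij_betw[OF bij])
  finally show ?thesis using cg by simp
qed

lemma key_identity:
  assumes re: "Re ((-1) ^ m * (\<Prod>j<l. e j)) = 0"
  shows "e 0 * od 0 + cnj (e (2*m)) * ev m = 0"
proof -
  define P where "P = (\<Prod>j<l. e j)"
  have "e 0 * (\<Prod>j\<in>{1..2*m}. e j) = (\<Prod>j\<in>{0..2*m}. e j)"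
    by (subst (2) prod.atLeast_Suc_atMost) simp_all
  also have "{0..2*m} = {..<l}" using lm by auto
  finally have A: "e 0 * od 0 = (-1)^m * P" unfolding od_def P_def by (simp add: algebra_simps)
  have "cnj (e (2*m)) * cnj (\<Prod>j<2*m. e j) = cnj (\<Prod>j<Suc (2*m). e j)"
    by (simp add: mult.commute)
  also have "Suc (2*m) = l" using lm by simp
  finally have B: "cnj (e (2*m)) * ev m = cnj ((-1)^m * P)" unfolding ev_def P_def
    by (simp add: algebra_simps)
  have "e 0 * od 0 + cnj (e (2*m)) * ev m = (-1)^m * P + cnj ((-1)^m * P)" using A B by simp
  also have "\<dots> = complex_of_real (2 * Re ((-1)^m * P))" by (rule complex_add_cnj)
  also have "\<dots> = 0" using re unfolding P_def by simp
  finally show ?thesis .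
qed

lemma G1:
  assumes re: "Re ((-1) ^ m * (\<Prod>j<l. e j)) = 0" and f: "f \<in> kerF V E phi"
  shows "f \<in> kerF V' E phi"
  unfolding kerF_def
proof safe
  fix a assume a: "a \<in> V'"
  show "nbsum V' E phi f a = 0"
  proof (cases "a = u")
    case True
    have "nbsum V E phi f u = 0" using f uV unfolding kerF_def by blast
    moreover have "f (p 1) = od 0 * f u" using uniq[OF f, of 1] pv_odd[of 0] l3 by simp
    moreover have "f (p (2*m)) = ev m * f u" using uniq[OF f, of "2*m"] pv_even[of m] lm by simp
    ultimately have "nbsum V' E phi f u + (e 0 * od 0 + cnj (e (2*m)) * ev m) * f u = 0"
      using nbsum_u[of f] by (simp add: algebra_simps)
    then show ?thesis using key_identity[OF re] True by simp
  next
    case False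
    then have "a \<in> V - set c" using a unfolding V'_def by auto
    then show ?thesis using nbsum_h[of a f] f unfolding kerF_def by auto
  qed
qed

lemma G2:
  assumes f1: "f1 \<in> kerF V E phi" and f2: "f2 \<in> kerF V E phi"
    and agree: "\<forall>b\<in>V'. f1 b = f2 b" and b: "b \<in> V"
  shows "f1 b = f2 b"
proof (cases "b \<in> set c")
  case True
  then obtain j where j: "j < l" "b = p j" using set_c by auto
  have "f1 u = f2 u" using agree unfolding V'_def by simp
  then show ?thesis using uniq[OF f1, of j] uniq[OF f2, of j] j by simp
next
  case False then show ?thesis using agree b unfolding V'_def by auto
qed

lemma G3:
  assumes re: "Re ((-1) ^ m * (\<Prod>j<l. e j)) = 0" and g: "g \<in> kerF V' E phi"
  shows "\<exists>f \<in> kerF V E phi. \<forall>b\<in>V'. f b = g b"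
proof -
  define idx where "idx b = (THE j. j < l \<and> p j = b)" for b
  have idx: "j < l \<Longrightarrow> idx (p j) = j" for j
    unfolding idx_def by (rule the_equality) (auto dest: p_inj)
  define f where "f b = (if b \<in> set c then pv (idx b) * g u else g b)" for b
  have fp: "j \<le> l \<Longrightarrow> f (p j) = pv j * g u" for j
  proof -
    assume j: "j \<le> l"
    show ?thesis
    proof (cases "j = l")
      case True then show ?thesis unfolding f_def using p_l p_0 idx[of 0] lpos pv_0 pv_l p_in[of 0] by simp
    next
      case False then show ?thesis unfolding f_def using idx[of j] j p_in by simp
    qed
  qed
  have fu: "f u = g u" using fp[of 0] p_0 pv_0 by simp
  have agree: "\<forall>b\<in>V'. f b = g b" using fu unfolding V'_def f_def by auto
  have "f \<in> kerF V E phi"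
    unfolding kerF_def
  proof safe
    fix a assume a: "a \<in> V"
    show "nbsum V E phi f a = 0"
    proof (cases "a \<in> set c")
      case False
      then have "nbsum V E phi f a = nbsum V' E phi f a" using nbsum_h a by simp
      also have "\<dots> = nbsum V' E phi g a" using agree by (intro nbsum_cong) auto
      also have "\<dots> = 0" using g a False unfolding kerF_def V'_def by auto
      finally show ?thesis .
    next
      case True
      then obtain j where j: "j < l" "a = p j" using set_c by auto
      show ?thesis
      proof (cases "j = 0")
        case True
        then have au: "a = u" using j p_0 by simp
        have "nbsum V' E phi f u = nbsum V' E phi g u" using agree by (intro nbsum_cong) auto
        also have "\<dots> = 0" using g unfolding kerF_def V'_def by auto
        finally have s0: "nbsum V' E phi f u = 0" .
        have "f (p 1) = od 0 * g u" using fp[of 1] pv_odd[of 0] l3 by simp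
        moreover have "f (p (2*m)) = ev m * g u" using fp[of "2*m"] pv_even[of m] lm by simp
        ultimately have "nbsum V E phi f u = (e 0 * od 0 + cnj (e (2*m)) * ev m) * g u"
          using nbsum_u[of f] s0 by (simp add: algebra_simps)
        then show ?thesis using key_identity[OF re] au by simp
      next
        case False
        then have j1: "1 \<le> j" "j \<le> 2*m" using j lm by auto
        have "nbsum V E phi f (p j) = cnj (e (j-1)) * f (p (j-1)) + e j * f (p (Suc j))"
          using nbsum_path j j1 by simp
        also have "\<dots> = (cnj (e (j-1)) * pv (j-1) + e j * pv (Suc j)) * g u"
          using fp[of "j-1"] fp[of "Suc j"] j j1 lm by (simp add: algebra_simps)
        also have "\<dots> = 0" using path_eq[OF j1] by simp
        finally show ?thesis using j by simp
      qed
    qed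
  qed
  then show ?thesis using agree by blast
qed

end


theorem lemma4p2:
  fixes V :: "'a::linorder set" and E :: "'a \<Rightarrow> 'a \<Rightarrow> bool"
    and phi :: "'a \<Rightarrow> 'a \<Rightarrow> complex" and c :: "'a list" and u :: 'a
  assumes "gain_graph V E phi"
    and "is_cycle V E c"
    and "u \<in> set c"
    and "degree V E u = 3"
    and "\<forall>x \<in> set c. x \<noteq> u \<longrightarrow> degree V E x = 2"
    and "odd (length c)"
    and "Re ((-1) ^ ((length c - 1) div 2) * cycle_gain phi c) = 0"
  shows "gain_rank V E phi = gain_rank ((V - set c) \<union> {u}) E phi + length c - 1"
proof -
  obtain k where k: "k < length c" "c ! k = u" using assms(3) by (auto simp: in_set_conv_nth)
  interpret P: pend V E phi c u k
    using assms k by unfold_locales auto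
  have re: "Re ((-1) ^ P.m * (\<Prod>j<length c. P.e j)) = 0"
    using assms(7) unfolding P.m_def P.cycle_gain_eq .
  have R: "gain_rank V E phi + card P.V' = gain_rank P.V' E phi + card V"
  proof (rule rank_reduce[OF P.finV P.V'V])
    show "\<And>f. f \<in> kerF V E phi \<Longrightarrow> f \<in> kerF P.V' E phi" using P.G1[OF re] by blast
    show "\<And>f1 f2 b. f1 \<in> kerF V E phi \<Longrightarrow> f2 \<in> kerF V E phi \<Longrightarrow> \<forall>b\<in>P.V'. f1 b = f2 b \<Longrightarrow> b \<in> V \<Longrightarrow> f1 b = f2 b"
      using P.G2 by blast
    show "\<And>g. g \<in> kerF P.V' E phi \<Longrightarrow> \<exists>f\<in>kerF V E phi. \<forall>b\<in>P.V'. f b = g b" using P.G3[OF re] by blast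
  qed
  have "card (set c) = length c" using P.dist by (simp add: distinct_card)
  then have "card (V - set c) = card V - length c" using P.setV P.finV by (simp add: card_Diff_subset)
  moreover have "u \<notin> V - set c" using assms(3) by simp
  moreover have "card (set c) \<le> card V" using P.setV P.finV card_mono by blast
  ultimately have "card P.V' = card V - length c + 1" "length c \<le> card V"
    unfolding P.V'_def using P.finV \<open>card (set c) = length c\<close> by auto
  then show ?thesis using R P.l3 unfolding P.V'_def by simp
qed

end
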